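(* Let $(\Omega,P)$ be a 2-class attributed random graph model and let $y(x)=(\phi'_G\circ\sigma\circ\phi_G)[X](i)$ be any generalized two-layer GCN without bias on $\Omega$ (with $\phi,\phi'$ linear un-biased aggregators, $\phi'$ mapping into $\mathbb{R}$, $\sigma$ the ReLU). Assume the relevant costs are finite. If $\Omega$ is class-symmetric about the origin, then $$C(L[y])\le C(y).$$ Furthermore, if $\Omega$ is symmetric about a subspace $S\subseteq\mathbb{R}^{m_{\mathrm{feat}}}$, then $$C(P_S[L[y]])\le C(L[y]).$$
   Context: A 2-class attributed random graph model is a probability space $(\Omega,P)$ of tuples $x=(G,i,v,X)$ where $G$ is a graph, $i$ is a node of $G$, $v:V(G)\to\{-1,1\}$ assigns classes and $X:V(G)\to\mathbb{R}^{m_{\mathrm{feat}}}$ assigns feature vectors; write $v(x)=v(i)$. Negation: $-x=(G,i,-v,-X)$ and $-F=\{-x:x\in F\}$. $\Omega$ is class-symmetric about the origin if $P(F)=P(-F)$ for all measurable $F\subseteq\Omega$. For a subspace $S\subseteq\mathbb{R}^{m_{\mathrm{feat}}}$, let $P_S$ be orthogonal projection onto $S$, $P_\perp=I-P_S$, and $R_S=P_S-P_\perp$ reflection across $S$; set $R_S(x)=(G,i,v,R_S\circ X)$ and $R_S(F)=\{R_S(x):x\in F\}$. $\Omega$ is symmetric about $S$ if $P(R_S(F))=P(F)$ for all measurable $F$. A model $y$ assigns a real number $y(x)$ to each $x\in\Omega$; its cost is $C(y)=\mathbb{E}_{x\sim\Omega}[-\log P(v(x):y(x))]$, where $P(v(x):y(x))=\sigma_s(y(x))$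 if $v(x)=1$ and $1-\sigma_s(y(x))$ if $v(x)=-1$, with $\sigma_s(z)=1/(1+e^{-z})$. A graph aggregation $\phi$ maps $(G,X)$ to new features $X':V(G)\to\mathbb{R}^l$; $\phi_G=\phi(G,\cdot)$; it is linear un-biased if $\phi_G(X_1+X_2)=\phi_G(X_1)+\phi_G(X_2)$ for all $G,X_1,X_2$ (and consequently commutes with scalar multiplication by $-1$, as used). A generalized two-layer GCN without bias is $y(x)=(\phi'_G\circ\sigma\circ\phi_G)[X](i)$ with $\sigma$ the ReLU applied entrywise. Its linear approximation is $L[y](x)=\tfrac12(\phi'_G\circ\phi_G)[X](i)$, and the projection of this onto $S$ is $P_S[L[y]](x)=\tfrac12(\phi'_G\circ\phi_G\circ P_S)[X](i)$. *)

theory Defs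
  imports "HOL-Probability.Probability"
begin

text \<open>A sample x = (G, i, v, X): graph G (abstract type 'g), node i, class assignment v
  (real valued, classes -1 and 1), feature assignment X with features in real^'m.\<close>
type_synonym ('g, 'v, 'm) sample = "'g \<times> 'v \<times> ('v \<Rightarrow> real) \<times> ('v \<Rightarrow> real ^ 'm::finite)"

definition sample_class :: "('g, 'v, 'm::finite) sample \<Rightarrow> real" where
  "sample_class x = (case x of (G, i, v, X) \<Rightarrow> v i)"

definition neg_sample :: "('g, 'v, 'm::finite) sample \<Rightarrow> ('g, 'v, 'm::finite) sample" where
  "neg_sample x = (case x of (G, i, v, X) \<Rightarrow> (G, i, \<lambda>u. - v u, \<lambda>u. - X u))"

definition class_symmetric :: "('g, 'v, 'm::finite) sample measure \<Rightarrow> bool" where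
  "class_symmetric M \<longleftrightarrow>
     (\<forall>F \<in> sets M. neg_sample ` F \<in> sets M \<and> measure M (neg_sample ` F) = measure M F)"

definition orth_proj :: "(real ^ 'm::finite) set \<Rightarrow> real ^ 'm \<Rightarrow> real ^ 'm" where
  "orth_proj S x = (THE p. p \<in> S \<and> (\<forall>s \<in> S. (x - p) \<bullet> s = 0))"

definition reflect :: "(real ^ 'm::finite) set \<Rightarrow> real ^ 'm \<Rightarrow> real ^ 'm" where
  "reflect S x = orth_proj S x - (x - orth_proj S x)"

definition reflect_sample :: "(real ^ 'm::finite) set \<Rightarrow> ('g, 'v, 'm::finite) sample \<Rightarrow> ('g, 'v, 'm::finite) sample" where
  "reflect_sample S x = (case x of (G, i, v, X) \<Rightarrow> (G, i, v, \<lambda>u. reflect S (X u)))"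

definition symmetric_about :: "('g, 'v, 'm::finite) sample measure \<Rightarrow> (real ^ 'm::finite) set \<Rightarrow> bool" where
  "symmetric_about M S \<longleftrightarrow>
     (\<forall>F \<in> sets M. reflect_sample S ` F \<in> sets M \<and> measure M (reflect_sample S ` F) = measure M F)"

definition sigmoid :: "real \<Rightarrow> real" where
  "sigmoid z = 1 / (1 + exp (- z))"

definition class_prob :: "real \<Rightarrow> real \<Rightarrow> real" where
  "class_prob c z = (if c = 1 then sigmoid z else 1 - sigmoid z)"

definition loss :: "('g, 'v, 'm::finite) sample \<Rightarrow> real \<Rightarrow> real" where
  "loss x z = - ln (class_prob (sample_class x) z)"

definition cost :: "('g, 'v, 'm::finite) sample measure \<Rightarrow> (('g, 'v, 'm::finite) sample \<Rightarrow> real) \<Rightarrow> real" where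
  "cost M y = (\<integral>x. loss x (y x) \<partial>M)"

text \<open>Finiteness of the cost (the loss is nonnegative, so this is integrability).\<close>
definition finite_cost :: "('g, 'v, 'm::finite) sample measure \<Rightarrow> (('g, 'v, 'm::finite) sample \<Rightarrow> real) \<Rightarrow> bool" where
  "finite_cost M y \<longleftrightarrow> integrable M (\<lambda>x. loss x (y x))"

definition lin_unbiased :: "('g \<Rightarrow> ('v \<Rightarrow> 'a::ab_group_add) \<Rightarrow> ('v \<Rightarrow> 'b::ab_group_add)) \<Rightarrow> bool" where
  "lin_unbiased \<phi> \<longleftrightarrow> (\<forall>G X1 X2. \<phi> G (\<lambda>u. X1 u + X2 u) = (\<lambda>u. \<phi> G X1 u + \<phi> G X2 u))"

definition relu_vec :: "real ^ 'l \<Rightarrow> real ^ 'l" where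
  "relu_vec h = (\<chi> j. max 0 (h $ j))"

definition gcn2 :: "('g \<Rightarrow> ('v \<Rightarrow> real ^ 'm::finite) \<Rightarrow> ('v \<Rightarrow> real ^ 'l::finite)) \<Rightarrow>
    ('g \<Rightarrow> ('v \<Rightarrow> real ^ 'l::finite) \<Rightarrow> ('v \<Rightarrow> real)) \<Rightarrow> ('g, 'v, 'm::finite) sample \<Rightarrow> real" where
  "gcn2 \<phi> \<phi>' x = (case x of (G, i, v, X) \<Rightarrow> \<phi>' G (\<lambda>u. relu_vec (\<phi> G X u)) i)"

definition lin_approx :: "('g \<Rightarrow> ('v \<Rightarrow> real ^ 'm::finite) \<Rightarrow> ('v \<Rightarrow> real ^ 'l::finite)) \<Rightarrow>
    ('g \<Rightarrow> ('v \<Rightarrow> real ^ 'l::finite) \<Rightarrow> ('v \<Rightarrow> real)) \<Rightarrow> ('g, 'v, 'm::finite) sample \<Rightarrow> real" where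
  "lin_approx \<phi> \<phi>' x = (case x of (G, i, v, X) \<Rightarrow> (1/2) * \<phi>' G (\<phi> G X) i)"

definition proj_lin_approx :: "(real ^ 'm::finite) set \<Rightarrow> ('g \<Rightarrow> ('v \<Rightarrow> real ^ 'm::finite) \<Rightarrow> ('v \<Rightarrow> real ^ 'l::finite)) \<Rightarrow>
    ('g \<Rightarrow> ('v \<Rightarrow> real ^ 'l::finite) \<Rightarrow> ('v \<Rightarrow> real)) \<Rightarrow> ('g, 'v, 'm::finite) sample \<Rightarrow> real" where
  "proj_lin_approx S \<phi> \<phi>' x =
     (case x of (G, i, v, X) \<Rightarrow> (1/2) * \<phi>' G (\<phi> G (\<lambda>u. orth_proj S (X u))) i)"

end

theory Submission
  imports Defs
begin

lemma orth_proj_eq: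
  fixes S :: "(real ^ 'm::finite) set"
  assumes S: "subspace S" and p: "p \<in> S" and o: "\<forall>s\<in>S. (x - p) \<bullet> s = 0"
  shows "orth_proj S x = p"
  unfolding orth_proj_def
proof (rule the_equality)
  show "p \<in> S \<and> (\<forall>s\<in>S. (x - p) \<bullet> s = 0)" using p o by blast
next
  fix q assume q: "q \<in> S \<and> (\<forall>s\<in>S. (x - q) \<bullet> s = 0)"
  have d: "p - q \<in> S" using S p q by (simp add: subspace_diff)
  have "(x - q) \<bullet> (p - q) - (x - p) \<bullet> (p - q) = 0" using d q o by simp
  hence "(p - q) \<bullet> (p - q) = 0" by (simp add: inner_diff_left inner_diff_right inner_commute)
  thus "q = p" by simp
qed

lemma orth_proj_ex:
  fixes S :: "(real ^ 'm::finite) set"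
  assumes S: "subspace S"
  shows "orth_proj S x \<in> S \<and> (\<forall>s\<in>S. (x - orth_proj S x) \<bullet> s = 0)"
proof -
  obtain y z where y: "y \<in> span S" and z: "\<And>w. w \<in> span S \<Longrightarrow> orthogonal z w" and e: "x = y + z"
    using orthogonal_subspace_decomp_exists[of S x] by blast
  have yS: "y \<in> S" using y S by (metis span_eq_iff)
  have "\<forall>s\<in>S. (x - y) \<bullet> s = 0" using z e span_base by (force simp: orthogonal_def)
  with orth_proj_eq[OF S yS] yS show ?thesis by simp
qed

lemma reflect_invol:
  fixes S :: "(real ^ 'm::finite) set"
  assumes S: "subspace S"
  shows "reflect S (reflect S x) = x"
proof -
  let ?p = "orth_proj S x"
  have h: "?p \<in> S \<and> (\<forall>s\<in>S. (x - ?p) \<bullet> s = 0)" by (rule orth_proj_ex[OF S])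
  have r: "reflect S x = 2 *\<^sub>R ?p - x" unfolding reflect_def by (simp add: scaleR_2)
  have "\<forall>s\<in>S. (reflect S x - ?p) \<bullet> s = 0"
  proof
    fix s assume "s \<in> S"
    have "reflect S x - ?p = - (x - ?p)" using r by (simp add: scaleR_2 algebra_simps)
    hence "(reflect S x - ?p) \<bullet> s = - ((x - ?p) \<bullet> s)" by (metis inner_minus_left)
    thus "(reflect S x - ?p) \<bullet> s = 0" using h \<open>s \<in> S\<close> by simp
  qed
  hence "orth_proj S (reflect S x) = ?p" using orth_proj_eq[OF S] h by blast
  thus ?thesis unfolding reflect_def by simp
qed

lemma invol_pres:
  fixes f :: "'a \<Rightarrow> real"
  assumes P: "prob_space M"
    and H: "\<forall>F\<in>sets M. T ` F \<in> sets M \<and> measure M (T ` F) = measure M F"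
    and I: "\<And>x. x \<in> space M \<Longrightarrow> T (T x) = x"
    and f: "integrable M f"
  shows "integrable M (\<lambda>x. f (T x)) \<and> integral\<^sup>L M (\<lambda>x. f (T x)) = integral\<^sup>L M f"
proof -
  interpret prob_space M by (rule P)
  have sp: "T ` space M \<subseteq> space M" using H sets.sets_into_space by blast
  have pre: "T -` F \<inter> space M = T ` F" if "F \<in> sets M" for F
  proof -
    have Fs: "F \<subseteq> space M" using that sets.sets_into_space by blast
    show ?thesis
    proof
      show "T -` F \<inter> space M \<subseteq> T ` F"
      proof
        fix x assume "x \<in> T -` F \<inter> space M"
        hence "T x \<in> F" "x = T (T x)" using I by auto
        thus "x \<in> T ` F" by blast
      qed
      show "T ` F \<subseteq> T -` F \<inter> space M"
      proof
        fix x assume "x \<in> T ` F"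
        then obtain y where "y \<in> F" "x = T y" by blast
        thus "x \<in> T -` F \<inter> space M" using I Fs sp by auto
      qed
    qed
  qed
  have meas: "T \<in> M \<rightarrow>\<^sub>M M"
    by (rule measurableI) (use sp pre H in auto)
  have D: "distr M M T = M"
  proof (rule measure_eqI)
    show "sets (distr M M T) = sets M" by simp
    fix A assume "A \<in> sets (distr M M T)"
    hence A: "A \<in> sets M" by simp
    have "emeasure (distr M M T) A = emeasure M (T ` A)"
      using emeasure_distr[OF meas A] pre[OF A] by simp
    also have "\<dots> = emeasure M A"
      using H A by (simp add: emeasure_eq_measure)
    finally show "emeasure (distr M M T) A = emeasure M A" .
  qed
  have fm: "f \<in> borel_measurable M" using f by simp
  have "integrable (distr M M T) f" using D f by simp
  hence i: "integrable M (\<lambda>x. f (T x))" using integrable_distr_eq[OF meas fm] by simp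
  have "integral\<^sup>L M f = integral\<^sup>L M (\<lambda>x. f (T x))"
    using integral_distr[OF meas fm] D by simp
  with i show ?thesis by simp
qed

lemma cp_pos: "c \<in> {-1,1} \<Longrightarrow> class_prob c z = 1 / (1 + exp (- c * z))"
proof -
  have a: "1 + exp t \<noteq> 0" for t :: real by (smt (verit) exp_gt_zero)
  assume "c \<in> {-1,1}"
  thus ?thesis unfolding class_prob_def sigmoid_def
    using a[of z] a[of "-z"] by (auto simp: field_simps exp_minus)
qed

lemma loss_conv:
  assumes c: "(c::real) \<in> {-1,1}"
  shows "2 * (- ln (class_prob c ((a + b)/2))) \<le> - ln (class_prob c a) + - ln (class_prob c b)"
proof -
  define u where "u = exp (- c * a / 2)"
  define w where "w = exp (- c * b / 2)"
  have u: "u > 0" and w: "w > 0" by (auto simp: u_def w_def)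
  have ea: "exp (- c * a) = u * u" unfolding u_def by (simp flip: exp_add)
  have eb: "exp (- c * b) = w * w" unfolding w_def by (simp flip: exp_add)
  have em: "exp (- c * ((a + b)/2)) = u * w" unfolding u_def w_def
    by (simp flip: exp_add add: field_simps)
  have L: "- ln (class_prob c z) = ln (1 + exp (- c * z))" for z
    using cp_pos[OF c] by (simp add: ln_div)
  have key: "(1 + u*w) * (1 + u*w) \<le> (1 + u*u) * (1 + w*w)"
  proof -
    have "0 \<le> (u - w) * (u - w)" by simp
    thus ?thesis by (simp add: algebra_simps)
  qed
  have p1: "1 + u*u > 0" "1 + w*w > 0" "1 + u*w > 0" using u w by (auto intro: add_pos_pos)
  have "2 * ln (1 + u*w) = ln ((1 + u*w) * (1 + u*w))"
    using u w by (simp add: ln_mult)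
  also have "\<dots> \<le> ln ((1 + u*u) * (1 + w*w))"
    using key p1 by (simp add: mult_pos_pos)
  also have "\<dots> = ln (1 + u*u) + ln (1 + w*w)"
    using p1 by (simp add: ln_mult)
  finally show ?thesis using L ea eb em by simp
qed

lemma cp_neg: "c \<in> {-1,1} \<Longrightarrow> class_prob (- c) z = class_prob c (- z)"
  using cp_pos[of c] cp_pos[of "-c"] by auto

lemma lin0:
  assumes "lin_unbiased \<phi>"
  shows "\<phi> G (\<lambda>u. - X u) = (\<lambda>u. - \<phi> G X u)"
proof -
  have z: "\<phi> G (\<lambda>u. 0) = (\<lambda>u. 0)"
    using assms[unfolded lin_unbiased_def, rule_format, of G "\<lambda>u. 0" "\<lambda>u. 0"]
    by (metis add.right_neutral add_cancel_right_right)
  have "\<phi> G (\<lambda>u. X u + - X u) = (\<lambda>u. \<phi> G X u + \<phi> G (\<lambda>u. - X u) u)"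
    using assms[unfolded lin_unbiased_def, rule_format, of G X "\<lambda>u. - X u"] by simp
  with z have "(\<lambda>u. \<phi> G X u + \<phi> G (\<lambda>u. - X u) u) = (\<lambda>u. 0)" by simp
  thus ?thesis by (metis add_eq_0_iff)
qed

lemma relu_diff: "relu_vec h - relu_vec (- h) = h"
  unfolding relu_vec_def by (rule vec_eq_iff[THEN iffD2]) auto

theorem theorem2:
  fixes M :: "('g, 'v, 'm::finite) sample measure"
    and \<phi> :: "'g \<Rightarrow> ('v \<Rightarrow> real ^ 'm) \<Rightarrow> ('v \<Rightarrow> real ^ 'l::finite)"
    and \<phi>' :: "'g \<Rightarrow> ('v \<Rightarrow> real ^ 'l) \<Rightarrow> ('v \<Rightarrow> real)"
    and S :: "(real ^ 'm) set"
  assumes "prob_space M"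
    and "\<forall>x \<in> space M. sample_class x \<in> {-1, 1}"
    and "lin_unbiased \<phi>" and "lin_unbiased \<phi>'"
  shows "(finite_cost M (gcn2 \<phi> \<phi>') \<and> finite_cost M (lin_approx \<phi> \<phi>') \<and> class_symmetric M
           \<longrightarrow> cost M (lin_approx \<phi> \<phi>') \<le> cost M (gcn2 \<phi> \<phi>'))
         \<and> (subspace S \<and> finite_cost M (lin_approx \<phi> \<phi>') \<and> finite_cost M (proj_lin_approx S \<phi> \<phi>')
           \<and> symmetric_about M S
           \<longrightarrow> cost M (proj_lin_approx S \<phi> \<phi>') \<le> cost M (lin_approx \<phi> \<phi>'))"
proof (intro conjI impI)
  note P = assms(1) and C = assms(2) and A1 = assms(3) and A2 = assms(4)
  {
    assume h: "finite_cost M (gcn2 \<phi> \<phi>') \<and> finite_cost M (lin_approx \<phi> \<phi>') \<and> class_symmetric M"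
    let ?y = "gcn2 \<phi> \<phi>'" and ?L = "lin_approx \<phi> \<phi>'"
    let ?f = "\<lambda>x. loss x (?y x)"
    have fi: "integrable M ?f" using h unfolding finite_cost_def by simp
    have Li: "integrable M (\<lambda>x. loss x (?L x))" using h unfolding finite_cost_def by simp
    have inv: "neg_sample (neg_sample x) = x" for x :: "('g, 'v, 'm) sample"
      unfolding neg_sample_def by (cases x) auto
    from invol_pres[OF P h[THEN conjunct2, THEN conjunct2, unfolded class_symmetric_def] _ fi] inv
    have N: "integrable M (\<lambda>x. ?f (neg_sample x))" "integral\<^sup>L M (\<lambda>x. ?f (neg_sample x)) = integral\<^sup>L M ?f"
      by auto
    have pt: "2 * loss x (?L x) \<le> ?f x + ?f (neg_sample x)" if "x \<in> space M" for x
    proof -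
      obtain G i v X where x: "x = (G, i, v, X)" by (cases x) auto
      have "sample_class x \<in> {-1,1}" using C that by blast
      hence c: "v i \<in> {-1,1}" by (simp add: x sample_class_def)
      define hh where "hh = \<phi> G X"
      have yn: "?y (neg_sample x) = \<phi>' G (\<lambda>u. relu_vec (- hh u)) i"
        unfolding x neg_sample_def gcn2_def hh_def using lin0[OF A1] by simp
      have yx: "?y x = \<phi>' G (\<lambda>u. relu_vec (hh u)) i" unfolding x gcn2_def hh_def by simp
      have add: "\<phi>' G (\<lambda>u. relu_vec (- hh u)) i + \<phi>' G (\<lambda>u. hh u) i = \<phi>' G (\<lambda>u. relu_vec (hh u)) i"
      proof -
        have "\<phi>' G (\<lambda>u. relu_vec (- hh u) + hh u) = (\<lambda>u. \<phi>' G (\<lambda>u. relu_vec (- hh u)) u + \<phi>' G hh u)"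
          using A2[unfolded lin_unbiased_def, rule_format, of G "\<lambda>u. relu_vec (- hh u)" hh] by simp
        moreover have "(\<lambda>u. relu_vec (- hh u) + hh u) = (\<lambda>u. relu_vec (hh u))"
          using relu_diff by (metis add_diff_cancel_left' diff_add_cancel)
        ultimately show ?thesis by (metis (no_types) eta_contract_eq)
      qed
      have Lx: "?L x = (?y x + - ?y (neg_sample x)) / 2"
        unfolding yn yx using add unfolding x lin_approx_def hh_def by simp
      have l1: "?f (neg_sample x) = - ln (class_prob (v i) (- ?y (neg_sample x)))"
        unfolding loss_def using cp_neg[OF c] by (simp add: x neg_sample_def sample_class_def)
      show ?thesis
        unfolding Lx l1 using loss_conv[OF c, of "?y x" "- ?y (neg_sample x)"]
        by (simp add: loss_def x sample_class_def)
    qed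
    have "integral\<^sup>L M (\<lambda>x. 2 * loss x (?L x)) \<le> integral\<^sup>L M (\<lambda>x. ?f x + ?f (neg_sample x))"
      by (rule integral_mono) (use Li fi N pt in auto)
    hence "2 * cost M ?L \<le> cost M ?y + cost M ?y"
      using fi N unfolding cost_def by simp
    thus "cost M ?L \<le> cost M ?y" by simp
  }
  {
    assume h: "subspace S \<and> finite_cost M (lin_approx \<phi> \<phi>') \<and> finite_cost M (proj_lin_approx S \<phi> \<phi>')
           \<and> symmetric_about M S"
    let ?y = "lin_approx \<phi> \<phi>'" and ?L = "proj_lin_approx S \<phi> \<phi>'"
    let ?f = "\<lambda>x. loss x (?y x)"
    let ?R = "reflect_sample S"
    have fi: "integrable M ?f" using h unfolding finite_cost_def by simp
    have Li: "integrable M (\<lambda>x. loss x (?L x))" using h unfolding finite_cost_def by simp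
    have inv: "?R (?R x) = x" for x :: "('g, 'v, 'm) sample"
      unfolding reflect_sample_def using reflect_invol[of S] h by (cases x) auto
    from invol_pres[OF P h[THEN conjunct2, THEN conjunct2, THEN conjunct2, unfolded symmetric_about_def] _ fi] inv
    have N: "integrable M (\<lambda>x. ?f (?R x))" "integral\<^sup>L M (\<lambda>x. ?f (?R x)) = integral\<^sup>L M ?f"
      by auto
    have pt: "2 * loss x (?L x) \<le> ?f x + ?f (?R x)" if "x \<in> space M" for x
    proof -
      obtain G i v X where x: "x = (G, i, v, X)" by (cases x) auto
      have "sample_class x \<in> {-1,1}" using C that by blast
      hence c: "v i \<in> {-1,1}" by (simp add: x sample_class_def)
      define p where "p = (\<lambda>u. orth_proj S (X u))"
      have e1: "(\<lambda>u. X u + reflect S (X u)) = (\<lambda>u. p u + p u)"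
        unfolding reflect_def p_def by (simp add: algebra_simps)
      have a1: "\<phi> G (\<lambda>u. X u + reflect S (X u)) = (\<lambda>u. \<phi> G X u + \<phi> G (\<lambda>u. reflect S (X u)) u)"
        using A1[unfolded lin_unbiased_def, rule_format, of G X "\<lambda>u. reflect S (X u)"] by simp
      have a2: "\<phi> G (\<lambda>u. p u + p u) = (\<lambda>u. \<phi> G p u + \<phi> G p u)"
        using A1[unfolded lin_unbiased_def, rule_format, of G p p] by simp
      have a3: "\<phi>' G (\<lambda>u. \<phi> G X u + \<phi> G (\<lambda>u. reflect S (X u)) u)
          = (\<lambda>u. \<phi>' G (\<phi> G X) u + \<phi>' G (\<phi> G (\<lambda>u. reflect S (X u))) u)"
        using A2[unfolded lin_unbiased_def, rule_format, of G "\<phi> G X" "\<phi> G (\<lambda>u. reflect S (X u))"] by simp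
      have a4: "\<phi>' G (\<lambda>u. \<phi> G p u + \<phi> G p u) = (\<lambda>u. \<phi>' G (\<phi> G p) u + \<phi>' G (\<phi> G p) u)"
        using A2[unfolded lin_unbiased_def, rule_format, of G "\<phi> G p" "\<phi> G p"] by simp
      have sum: "\<phi>' G (\<phi> G X) i + \<phi>' G (\<phi> G (\<lambda>u. reflect S (X u))) i = 2 * \<phi>' G (\<phi> G p) i"
        using fun_cong[OF a3, of i] fun_cong[OF a4, of i] a1 a2 e1 by simp
      have Lx: "?L x = (?y x + ?y (?R x)) / 2"
        using sum unfolding x proj_lin_approx_def lin_approx_def reflect_sample_def p_def by simp
      have l1: "?f (?R x) = - ln (class_prob (v i) (?y (?R x)))"
        unfolding loss_def by (simp add: x reflect_sample_def sample_class_def)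
      show ?thesis
        unfolding Lx l1 using loss_conv[OF c, of "?y x" "?y (?R x)"]
        by (simp add: loss_def x sample_class_def)
    qed
    have "integral\<^sup>L M (\<lambda>x. 2 * loss x (?L x)) \<le> integral\<^sup>L M (\<lambda>x. ?f x + ?f (?R x))"
      by (rule integral_mono) (use Li fi N pt in auto)
    hence "2 * cost M ?L \<le> cost M ?y + cost M ?y"
      using fi N unfolding cost_def by simp
    thus "cost M ?L \<le> cost M ?y" by simp
  }
qed

end
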